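(* For all integers $m\ge 2$, $n\ge 2$, the state complexity of the combined operation $L(M)^*\cup L(N)$, where $M$ ranges over complete DFAs with $m$ states and $N$ over complete DFAs with $n$ states (over a common alphabet), is exactly $\frac{3}{4}2^m\cdot n-n+1$. That is, for every such $M,N$ some DFA with at most $\frac{3}{4}2^m\cdot n-n+1$ states accepts $L(M)^*\cup L(N)$, and there exist such $M,N$ for which the minimal complete DFA of $L(M)^*\cup L(N)$ has exactly $\frac{3}{4}2^m\cdot n-n+1$ states.
   Context: DFAs are complete deterministic finite automata $(Q,\Sigma,\delta,s,F)$; $L(M)$ is the accepted language; $L^*$ is the Kleene star. The state complexity of a regular language is the number of states of its minimal complete DFA; the state complexity of an operation is the maximum state complexity of its result over all argument DFAs of the given sizes. *)

theory Defs
  imports Main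
begin

definition dfa :: "'s set \<Rightarrow> 'a set \<Rightarrow> ('s \<Rightarrow> 'a \<Rightarrow> 's) \<Rightarrow> 's \<Rightarrow> 's set \<Rightarrow> bool" where
  "dfa Q \<Sigma> \<delta> s F \<longleftrightarrow> finite Q \<and> finite \<Sigma> \<and> s \<in> Q \<and> F \<subseteq> Q \<and>
     (\<forall>q\<in>Q. \<forall>a\<in>\<Sigma>. \<delta> q a \<in> Q)"

definition delta_hat :: "('s \<Rightarrow> 'a \<Rightarrow> 's) \<Rightarrow> 's \<Rightarrow> 'a list \<Rightarrow> 's" where
  "delta_hat \<delta> q w = foldl \<delta> q w"

definition lang :: "'a set \<Rightarrow> ('s \<Rightarrow> 'a \<Rightarrow> 's) \<Rightarrow> 's \<Rightarrow> 's set \<Rightarrow> 'a list set" where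
  "lang \<Sigma> \<delta> s F = {w. w \<in> lists \<Sigma> \<and> delta_hat \<delta> s w \<in> F}"

definition kstar :: "'a list set \<Rightarrow> 'a list set" where
  "kstar L = {concat ws | ws. set ws \<subseteq> L}"

text \<open>State complexity of L over alphabet Sigma: number of states of a minimal complete DFA
  (state names are taken from nat w.l.o.g.).\<close>
definition sc :: "'a set \<Rightarrow> 'a list set \<Rightarrow> nat" where
  "sc \<Sigma> L = (LEAST k. \<exists>(Q::nat set) \<delta> s F. dfa Q \<Sigma> \<delta> s F \<and> card Q = k \<and> lang \<Sigma> \<delta> s F = L)"

end

theory Submission
  imports Defs "HOL-Library.Countable"
begin


lemma dh_Nil[simp]: "delta_hat \<delta> q [] = q" by (simp add: delta_hat_def)
lemma dh_append[simp]: "delta_hat \<delta> q (u @ v) = delta_hat \<delta> (delta_hat \<delta> q u) v"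
  by (simp add: delta_hat_def)
lemma dh_Cons[simp]: "delta_hat \<delta> q (a # v) = delta_hat \<delta> (\<delta> q a) v"
  by (simp add: delta_hat_def)

lemma dh_in:
  assumes "dfa Q \<Sigma> \<delta> s F" "q \<in> Q" "w \<in> lists \<Sigma>"
  shows "delta_hat \<delta> q w \<in> Q"
  using assms(2,3)
proof (induction w arbitrary: q)
  case Nil then show ?case by simp
next
  case (Cons a w)
  then have "\<delta> q a \<in> Q" using assms(1) by (auto simp: dfa_def)
  then show ?case using Cons by simp
qed

lemma lang_lists: "lang \<Sigma> \<delta> s F \<subseteq> lists \<Sigma>" by (auto simp: lang_def)

lemma kstar_Nil: "[] \<in> kstar L"
  unfolding kstar_def by (rule CollectI, rule exI[of _ "[]"]) simp

lemma kstar_snoc: "u \<in> kstar L \<Longrightarrow> v \<in> L \<Longrightarrow> u @ v \<in> kstar L"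
  unfolding kstar_def
proof -
  assume "u \<in> {concat ws |ws. set ws \<subseteq> L}" "v \<in> L"
  then obtain ws where "u = concat ws" "set ws \<subseteq> L" by auto
  then show "u @ v \<in> {concat ws |ws. set ws \<subseteq> L}"
    using \<open>v \<in> L\<close> by (intro CollectI exI[of _ "ws @ [v]"]) auto
qed

lemma kstar_last_aux: "set ws \<subseteq> L \<Longrightarrow> concat ws \<noteq> [] \<Longrightarrow>
   \<exists>u v. concat ws = u @ v \<and> u \<in> kstar L \<and> v \<in> L \<and> v \<noteq> []"
proof (induction ws rule: rev_induct)
  case Nil then show ?case by simp
next
  case (snoc x ws)
  show ?case
  proof (cases "x = []")
    case True
    then show ?thesis using snoc by auto
  next
    case False
    have "concat ws \<in> kstar L" using snoc.prems unfolding kstar_def by auto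
    then show ?thesis using False snoc.prems by (intro exI[of _ "concat ws"] exI[of _ x]) auto
  qed
qed

lemma kstar_last: "w \<in> kstar L \<Longrightarrow> w \<noteq> [] \<Longrightarrow> \<exists>u v. w = u @ v \<and> u \<in> kstar L \<and> v \<in> L \<and> v \<noteq> []"
  unfolding kstar_def using kstar_last_aux unfolding kstar_def by blast

lemma kstar_lists: "L \<subseteq> lists \<Sigma> \<Longrightarrow> kstar L \<subseteq> lists \<Sigma>"
  unfolding kstar_def by auto (meson in_listsD subset_iff)


definition Rset :: "'a set \<Rightarrow> ('s \<Rightarrow> 'a \<Rightarrow> 's) \<Rightarrow> 's \<Rightarrow> 's set \<Rightarrow> 'a list \<Rightarrow> 's set" where
  "Rset \<Sigma> \<delta> s F w = {delta_hat \<delta> s v | u v. w = u @ v \<and> u \<in> kstar (lang \<Sigma> \<delta> s F)}"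

lemma K2:
  assumes "w \<in> lists \<Sigma>"
  shows "w \<in> kstar (lang \<Sigma> \<delta> s F) \<longleftrightarrow> w = [] \<or> Rset \<Sigma> \<delta> s F w \<inter> F \<noteq> {}"
proof
  assume "w \<in> kstar (lang \<Sigma> \<delta> s F)"
  then show "w = [] \<or> Rset \<Sigma> \<delta> s F w \<inter> F \<noteq> {}"
    using kstar_last[of w] unfolding Rset_def lang_def by blast
next
  assume "w = [] \<or> Rset \<Sigma> \<delta> s F w \<inter> F \<noteq> {}"
  then show "w \<in> kstar (lang \<Sigma> \<delta> s F)"
  proof
    assume "w = []" then show ?thesis by (simp add: kstar_Nil)
  next
    assume "Rset \<Sigma> \<delta> s F w \<inter> F \<noteq> {}"
    then obtain u v where uv: "w = u @ v" "u \<in> kstar (lang \<Sigma> \<delta> s F)" "delta_hat \<delta> s v \<in> F"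
      unfolding Rset_def by blast
    then have "v \<in> lang \<Sigma> \<delta> s F" using assms by (auto simp: lang_def)
    then show ?thesis using uv kstar_snoc by blast
  qed
qed


lemma snoc_split: "w @ [a] = u @ v \<Longrightarrow> v = [] \<or> (\<exists>v'. v = v' @ [a] \<and> w = u @ v')"
  by (cases v rule: rev_cases) auto


lemma K4:
  assumes "w @ [a] \<in> lists \<Sigma>"
  shows "Rset \<Sigma> \<delta> s F (w @ [a]) = (\<lambda>p. \<delta> p a) ` Rset \<Sigma> \<delta> s F w \<union>
     (if (\<lambda>p. \<delta> p a) ` Rset \<Sigma> \<delta> s F w \<inter> F \<noteq> {} then {s} else {})"
proof -
  let ?L = "lang \<Sigma> \<delta> s F"
  have mem: "w @ [a] \<in> kstar ?L \<longleftrightarrow> (\<lambda>p. \<delta> p a) ` Rset \<Sigma> \<delta> s F w \<inter> F \<noteq> {}"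
  proof
    assume "w @ [a] \<in> kstar ?L"
    then obtain u v where uv: "w @ [a] = u @ v" "u \<in> kstar ?L" "v \<in> ?L" "v \<noteq> []"
      using kstar_last[of "w @ [a]" ?L] by auto
    then obtain v' where v': "v = v' @ [a]" "w = u @ v'" using snoc_split[OF uv(1)] uv(4) by auto
    then have "delta_hat \<delta> s v' \<in> Rset \<Sigma> \<delta> s F w" using uv unfolding Rset_def by blast
    moreover have "\<delta> (delta_hat \<delta> s v') a \<in> F" using uv v' by (simp add: lang_def)
    ultimately show "(\<lambda>p. \<delta> p a) ` Rset \<Sigma> \<delta> s F w \<inter> F \<noteq> {}" by blast
  next
    assume "(\<lambda>p. \<delta> p a) ` Rset \<Sigma> \<delta> s F w \<inter> F \<noteq> {}"
    then obtain u v' where uv: "w = u @ v'" "u \<in> kstar ?L" "\<delta> (delta_hat \<delta> s v') a \<in> F"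
      unfolding Rset_def by blast
    then have "v' @ [a] \<in> ?L" using assms by (auto simp: lang_def)
    then have "u @ (v' @ [a]) \<in> kstar ?L" using uv kstar_snoc by blast
    then show "w @ [a] \<in> kstar ?L" using uv by simp
  qed
  show ?thesis
  proof (rule set_eqI, rule iffI)
    fix x assume "x \<in> Rset \<Sigma> \<delta> s F (w @ [a])"
    then obtain u v where uv: "w @ [a] = u @ v" "u \<in> kstar ?L" "x = delta_hat \<delta> s v"
      unfolding Rset_def by blast
    from snoc_split[OF uv(1)] show "x \<in> (\<lambda>p. \<delta> p a) ` Rset \<Sigma> \<delta> s F w \<union>
     (if (\<lambda>p. \<delta> p a) ` Rset \<Sigma> \<delta> s F w \<inter> F \<noteq> {} then {s} else {})"
    proof
      assume "v = []"
      then show ?thesis using uv mem by auto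
    next
      assume "\<exists>v'. v = v' @ [a] \<and> w = u @ v'"
      then obtain v' where "v = v' @ [a]" "w = u @ v'" by blast
      then show ?thesis using uv unfolding Rset_def by auto
    qed
  next
    fix x assume x: "x \<in> (\<lambda>p. \<delta> p a) ` Rset \<Sigma> \<delta> s F w \<union>
     (if (\<lambda>p. \<delta> p a) ` Rset \<Sigma> \<delta> s F w \<inter> F \<noteq> {} then {s} else {})"
    show "x \<in> Rset \<Sigma> \<delta> s F (w @ [a])"
    proof (cases "x \<in> (\<lambda>p. \<delta> p a) ` Rset \<Sigma> \<delta> s F w")
      case True
      then obtain u v' where "w = u @ v'" "u \<in> kstar ?L" "x = \<delta> (delta_hat \<delta> s v') a"
        unfolding Rset_def by blast
      then show ?thesis unfolding Rset_def
        by (intro CollectI exI[of _ u] exI[of _ "v' @ [a]"]) simp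
    next
      case False
      then have "x = s" "w @ [a] \<in> kstar ?L" using x mem by (auto split: if_splits)
      then show ?thesis unfolding Rset_def
        by (intro CollectI exI[of _ "w @ [a]"] exI[of _ "[]"]) simp
    qed
  qed
qed


lemma R_Nil: "Rset \<Sigma> \<delta> s F [] = {s}"
  unfolding Rset_def using kstar_Nil by auto

lemma R_sub:
  assumes "dfa Q \<Sigma> \<delta> s F" "w \<in> lists \<Sigma>"
  shows "Rset \<Sigma> \<delta> s F w \<subseteq> Q"
proof
  fix x assume "x \<in> Rset \<Sigma> \<delta> s F w"
  then obtain u v where "w = u @ v" "x = delta_hat \<delta> s v" unfolding Rset_def by blast
  moreover have "s \<in> Q" using assms(1) by (simp add: dfa_def)
  ultimately show "x \<in> Q" using dh_in[OF assms(1)] assms(2) by simp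
qed

lemma R_self: "delta_hat \<delta> s w \<in> Rset \<Sigma> \<delta> s F w"
  unfolding Rset_def using kstar_Nil by (intro CollectI exI[of _ "[]"] exI[of _ w]) simp

lemma R_closed:
  assumes "w \<in> lists \<Sigma>" "Rset \<Sigma> \<delta> s F w \<inter> F \<noteq> {}"
  shows "s \<in> Rset \<Sigma> \<delta> s F w"
proof -
  have "w \<in> kstar (lang \<Sigma> \<delta> s F)" using iffD2[OF K2[OF assms(1), of \<delta> s F]] assms(2) by simp
  then show ?thesis unfolding Rset_def by (intro CollectI exI[of _ w] exI[of _ "[]"]) simp
qed

fun stp :: "('s \<Rightarrow> 'a \<Rightarrow> 's) \<Rightarrow> 's \<Rightarrow> 's set \<Rightarrow> ('t \<Rightarrow> 'a \<Rightarrow> 't) \<Rightarrow> bool \<times> 's set \<times> 't \<Rightarrow> 'a \<Rightarrow> bool \<times> 's set \<times> 't" where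
  "stp \<delta>1 s1 F1 \<delta>2 (b, X, q) a = (False, (\<lambda>p. \<delta>1 p a) ` X \<union>
     (if (\<lambda>p. \<delta>1 p a) ` X \<inter> F1 \<noteq> {} then {s1} else {}), \<delta>2 q a)"

fun acc :: "'s set \<Rightarrow> 't set \<Rightarrow> bool \<times> 's set \<times> 't \<Rightarrow> bool" where
  "acc F1 F2 (b, X, q) = (b \<or> X \<inter> F1 \<noteq> {} \<or> q \<in> F2)"

definition Phi :: "'a set \<Rightarrow> ('s \<Rightarrow> 'a \<Rightarrow> 's) \<Rightarrow> 's \<Rightarrow> 's set \<Rightarrow> ('t \<Rightarrow> 'a \<Rightarrow> 't) \<Rightarrow> 't \<Rightarrow> 'a list \<Rightarrow> bool \<times> 's set \<times> 't" where
  "Phi \<Sigma> \<delta>1 s1 F1 \<delta>2 s2 w = (w = [], Rset \<Sigma> \<delta>1 s1 F1 w, delta_hat \<delta>2 s2 w)"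

lemma Phi_Nil: "Phi \<Sigma> \<delta>1 s1 F1 \<delta>2 s2 [] = (True, {s1}, s2)"
  by (simp add: Phi_def R_Nil)

lemma Phi_snoc: "w @ [a] \<in> lists \<Sigma> \<Longrightarrow>
  Phi \<Sigma> \<delta>1 s1 F1 \<delta>2 s2 (w @ [a]) = stp \<delta>1 s1 F1 \<delta>2 (Phi \<Sigma> \<delta>1 s1 F1 \<delta>2 s2 w) a"
  unfolding Phi_def using K4[of w a \<Sigma> \<delta>1 s1 F1] by simp

lemma Phi_acc: "w \<in> lists \<Sigma> \<Longrightarrow>
  (w \<in> kstar (lang \<Sigma> \<delta>1 s1 F1) \<union> lang \<Sigma> \<delta>2 s2 F2) = acc F1 F2 (Phi \<Sigma> \<delta>1 s1 F1 \<delta>2 s2 w)"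
proof -
  assume w: "w \<in> lists \<Sigma>"
  have "w \<in> kstar (lang \<Sigma> \<delta>1 s1 F1) \<longleftrightarrow> w = [] \<or> Rset \<Sigma> \<delta>1 s1 F1 w \<inter> F1 \<noteq> {}"
    by (rule K2[OF w])
  then show ?thesis using w unfolding Phi_def lang_def by simp
qed

lemma star_union_lists: "kstar (lang \<Sigma> \<delta>1 s1 F1) \<union> lang \<Sigma> \<delta>2 s2 F2 \<subseteq> lists \<Sigma>"
  by (intro Un_least kstar_lists lang_lists)

lemma dfa_from_phi:
  fixes \<Phi> :: "'a list \<Rightarrow> 'x"
  assumes fin: "finite \<Sigma>"
    and stp: "\<And>w a. w \<in> lists \<Sigma> \<Longrightarrow> a \<in> \<Sigma> \<Longrightarrow> \<Phi> (w @ [a]) = st (\<Phi> w) a"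
    and L: "L = {w \<in> lists \<Sigma>. ac (\<Phi> w)}"
    and S: "\<Phi> ` lists \<Sigma> \<subseteq> S" "finite S"
  shows "\<exists>(Q::nat set) \<delta> s F. dfa Q \<Sigma> \<delta> s F \<and> card Q \<le> card S \<and> lang \<Sigma> \<delta> s F = L"
proof -
  let ?Q0 = "\<Phi> ` lists \<Sigma>"
  have fQ0: "finite ?Q0" using S finite_subset by blast
  obtain h where h: "bij_betw h ?Q0 {0..<card ?Q0}" using ex_bij_betw_finite_nat[OF fQ0] by blast
  define g where "g = inv_into ?Q0 h"
  define \<delta> where "\<delta> = (\<lambda>i a. h (st (g i) a))"
  define s where "s = h (\<Phi> [])"
  define F where "F = h ` {x \<in> ?Q0. ac x}"
  have inj: "inj_on h ?Q0" using h bij_betw_def by blast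
  have gh: "\<And>x. x \<in> ?Q0 \<Longrightarrow> g (h x) = x" unfolding g_def using inj by (simp add: inv_into_f_f)
  have dh: "delta_hat \<delta> s w = h (\<Phi> w)" if "w \<in> lists \<Sigma>" for w
    using that
  proof (induction w rule: rev_induct)
    case Nil show ?case by (simp add: s_def)
  next
    case (snoc a w)
    then have w: "w \<in> lists \<Sigma>" and a: "a \<in> \<Sigma>" by auto
    have "delta_hat \<delta> s (w @ [a]) = \<delta> (h (\<Phi> w)) a" using snoc w by simp
    also have "\<dots> = h (st (\<Phi> w) a)" unfolding \<delta>_def using gh w by simp
    also have "\<dots> = h (\<Phi> (w @ [a]))" using stp w a by simp
    finally show ?case .
  qed
  have d: "dfa (h ` ?Q0) \<Sigma> \<delta> s F" unfolding dfa_def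
  proof (intro conjI ballI)
    show "finite (h ` ?Q0)" using fQ0 by simp
    show "finite \<Sigma>" by (rule fin)
    show "s \<in> h ` ?Q0" unfolding s_def by blast
    show "F \<subseteq> h ` ?Q0" unfolding F_def by blast
  next
    fix q a assume q: "q \<in> h ` ?Q0" and a: "a \<in> \<Sigma>"
    then obtain w where w: "w \<in> lists \<Sigma>" "q = h (\<Phi> w)" by blast
    have "\<delta> q a = h (\<Phi> (w @ [a]))" unfolding \<delta>_def using w gh stp a by simp
    moreover have "w @ [a] \<in> lists \<Sigma>" using w a by simp
    ultimately show "\<delta> q a \<in> h ` ?Q0" by blast
  qed
  have c: "card (h ` ?Q0) \<le> card S"
    using card_image[OF inj] card_mono[OF S(2) S(1)] by simp
  have "lang \<Sigma> \<delta> s F = L"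
  proof (rule set_eqI)
    fix w
    show "w \<in> lang \<Sigma> \<delta> s F \<longleftrightarrow> w \<in> L"
    proof (cases "w \<in> lists \<Sigma>")
      case True
      have "h (\<Phi> w) \<in> F \<longleftrightarrow> ac (\<Phi> w)"
      proof
        assume "h (\<Phi> w) \<in> F"
        then obtain x where "x \<in> ?Q0" "ac x" "h (\<Phi> w) = h x" unfolding F_def by blast
        then show "ac (\<Phi> w)" using inj True by (metis image_eqI inj_on_def)
      next
        assume "ac (\<Phi> w)" then show "h (\<Phi> w) \<in> F" unfolding F_def using True by blast
      qed
      then show ?thesis using True dh[OF True] L by (simp add: lang_def)
    next
      case False then show ?thesis using L by (simp add: lang_def)
    qed
  qed
  then show ?thesis using d c by blast
qed

lemma lower_by_dist:
  assumes d: "dfa Q \<Sigma> \<delta> s F" and L: "lang \<Sigma> \<delta> s F = L"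
    and W: "\<And>i. i \<in> I \<Longrightarrow> wd i \<in> lists \<Sigma>"
    and D: "\<And>i j. i \<in> I \<Longrightarrow> j \<in> I \<Longrightarrow> i \<noteq> j \<Longrightarrow> \<exists>z \<in> lists \<Sigma>. (wd i @ z \<in> L) \<noteq> (wd j @ z \<in> L)"
  shows "card I \<le> card Q"
proof -
  have sQ: "s \<in> Q" using d by (simp add: dfa_def)
  have "inj_on (\<lambda>i. delta_hat \<delta> s (wd i)) I"
  proof (rule inj_onI, rule ccontr)
    fix i j assume i: "i \<in> I" and j: "j \<in> I" and eq: "delta_hat \<delta> s (wd i) = delta_hat \<delta> s (wd j)"
      and ne: "i \<noteq> j"
    obtain z where z: "z \<in> lists \<Sigma>" "(wd i @ z \<in> L) \<noteq> (wd j @ z \<in> L)" using D[OF i j ne] by blast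
    have "(wd i @ z \<in> L) = (wd j @ z \<in> L)"
      using eq z(1) W[OF i] W[OF j] unfolding L[symmetric] lang_def by simp
    then show False using z(2) by simp
  qed
  moreover have "(\<lambda>i. delta_hat \<delta> s (wd i)) ` I \<subseteq> Q" using dh_in[OF d sQ] W by blast
  moreover have "finite Q" using d by (simp add: dfa_def)
  ultimately show ?thesis using card_inj_on_le by blast
qed




lemma pow_bound: "m \<ge> 2 \<Longrightarrow> m + 1 \<le> 3 * 2^(m-2)"
proof -
  assume "m \<ge> 2"
  then obtain j where j: "m = j + 2" using le_Suc_ex by (metis add.commute)
  have "j + 3 \<le> 3 * 2^j"
  proof (induction j)
    case 0 then show ?case by simp
  next
    case (Suc j) then show ?case by simp
  qed
  then show ?thesis using j by simp
qed

lemma arith_K: "m \<ge> 2 \<Longrightarrow> 3 * 2^m * n div 4 - n + 1 = (3 * 2^(m-2) - 1) * n + (1::nat)"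
proof -
  assume "m \<ge> 2"
  then obtain j where j: "m = j + 2" using le_Suc_ex by (metis add.commute)
  have e1: "3 * 2^m * n div 4 = 3 * 2^j * n" using j by (simp add: power_add)
  have e2: "(3 * 2^(m-2) - 1) * n = 3 * 2^j * n - n" using j by (simp add: diff_mult_distrib)
  show ?thesis by (simp only: e1 e2)
qed

lemma kstar_empty: "kstar {} = {[]}"
  unfolding kstar_def by auto

lemma kstar_loop:
  assumes "F = {s}"
  shows "kstar (lang \<Sigma> \<delta> s F) = lang \<Sigma> \<delta> s F"
proof
  show "lang \<Sigma> \<delta> s F \<subseteq> kstar (lang \<Sigma> \<delta> s F)"
  proof
    fix w assume "w \<in> lang \<Sigma> \<delta> s F"
    then show "w \<in> kstar (lang \<Sigma> \<delta> s F)" unfolding kstar_def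
      by (intro CollectI exI[of _ "[w]"]) simp
  qed
next
  have "set ws \<subseteq> lang \<Sigma> \<delta> s F \<Longrightarrow> concat ws \<in> lang \<Sigma> \<delta> s F" for ws
  proof (induction ws)
    case Nil then show ?case using assms by (simp add: lang_def)
  next
    case (Cons x ws)
    then have "x \<in> lang \<Sigma> \<delta> s F" "concat ws \<in> lang \<Sigma> \<delta> s F" by auto
    then show ?case using assms by (simp add: lang_def)
  qed
  then show "kstar (lang \<Sigma> \<delta> s F) \<subseteq> lang \<Sigma> \<delta> s F" unfolding kstar_def by blast
qed

lemma Pset_card:
  assumes fQ: "finite Q1" and c1: "card Q1 = m" and f: "f \<in> Q1" "f \<in> F1" "f \<noteq> s1" and s: "s1 \<in> Q1"
  shows "card {P. P \<subseteq> Q1 \<and> P \<noteq> {} \<and> (P \<inter> F1 \<noteq> {} \<longrightarrow> s1 \<in> P)} \<le> 2^m - (1 + 2^(m-2))"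
proof -
  let ?I = "insert f ` Pow (Q1 - {f, s1})"
  let ?B = "insert {} ?I"
  have sub: "{P. P \<subseteq> Q1 \<and> P \<noteq> {} \<and> (P \<inter> F1 \<noteq> {} \<longrightarrow> s1 \<in> P)} \<subseteq> Pow Q1 - ?B"
    using f by blast
  have inj: "inj_on (insert f) (Pow (Q1 - {f, s1}))"
    by (rule inj_onI) (metis Diff_iff PowD insertCI insert_ident subsetD)
  have cD: "card (Q1 - {f, s1}) = m - 2" using f s c1 fQ by (simp add: card_Diff_subset)
  have cI: "card ?I = 2^(m-2)" using card_image[OF inj] fQ cD by (simp add: card_Pow)
  have "{} \<notin> ?I" by blast
  then have cB: "card ?B = 2^(m-2) + 1" using cI fQ by simp
  have BP: "?B \<subseteq> Pow Q1" using f by blast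
  have "card (Pow Q1 - ?B) = 2^m - (2^(m-2) + 1)"
    using card_Diff_subset[OF finite_subset[OF BP] BP] cB fQ c1 by (simp add: card_Pow)
  moreover have "card {P. P \<subseteq> Q1 \<and> P \<noteq> {} \<and> (P \<inter> F1 \<noteq> {} \<longrightarrow> s1 \<in> P)} \<le> card (Pow Q1 - ?B)"
    by (rule card_mono[OF _ sub]) (simp add: fQ)
  ultimately show ?thesis by simp
qed


lemma upper:
  fixes \<Sigma> :: "'a set" and Q1 :: "'s set" and Q2 :: "'t set"
  assumes m: "m \<ge> 2" and d1: "dfa Q1 \<Sigma> \<delta>1 s1 F1" and c1: "card Q1 = m"
    and d2: "dfa Q2 \<Sigma> \<delta>2 s2 F2" and c2: "card Q2 = n"
  shows "\<exists>(Q::nat set) \<delta> s F. dfa Q \<Sigma> \<delta> s F \<and> card Q \<le> (3 * 2^(m-2) - 1) * n + 1 \<and>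
     lang \<Sigma> \<delta> s F = kstar (lang \<Sigma> \<delta>1 s1 F1) \<union> lang \<Sigma> \<delta>2 s2 F2"
proof -
  have finS: "finite \<Sigma>" and fQ1: "finite Q1" and s1: "s1 \<in> Q1" and F1: "F1 \<subseteq> Q1"
    using d1 by (auto simp: dfa_def)
  have fQ2: "finite Q2" and s2: "s2 \<in> Q2" using d2 by (auto simp: dfa_def)
  have k1: "m + 1 \<le> 3 * 2^(m-2)" using pow_bound[OF m] .
  consider (E) "F1 = {}" | (S) "F1 = {s1}" | (G) f where "f \<in> F1" "f \<noteq> s1" by blast
  then show ?thesis
  proof cases
    case E
    define \<Phi> where "\<Phi> = (\<lambda>w. (w = [], delta_hat \<delta>2 s2 w))"
    define st where "st = (\<lambda>(x::bool \<times> 't) a. (False, \<delta>2 (snd x) a))"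
    define ac where "ac = (\<lambda>(x::bool \<times> 't). fst x \<or> snd x \<in> F2)"
    have L: "kstar (lang \<Sigma> \<delta>1 s1 F1) \<union> lang \<Sigma> \<delta>2 s2 F2 = {w \<in> lists \<Sigma>. ac (\<Phi> w)}"
    proof -
      have "lang \<Sigma> \<delta>1 s1 F1 = {}" using E by (simp add: lang_def)
      then have "kstar (lang \<Sigma> \<delta>1 s1 F1) = {[]}" using kstar_empty by simp
      then show ?thesis by (auto simp: lang_def ac_def \<Phi>_def)
    qed
    have st: "\<Phi> (w @ [a]) = st (\<Phi> w) a" for w a by (simp add: \<Phi>_def st_def)
    have sub: "\<Phi> ` lists \<Sigma> \<subseteq> UNIV \<times> Q2" using dh_in[OF d2 s2] by (auto simp: \<Phi>_def)
    have fin: "finite ((UNIV::bool set) \<times> Q2)" using fQ2 by simp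
    obtain Q \<delta> s F where r: "dfa (Q::nat set) \<Sigma> \<delta> s F" "card Q \<le> card ((UNIV::bool set) \<times> Q2)"
       "lang \<Sigma> \<delta> s F = kstar (lang \<Sigma> \<delta>1 s1 F1) \<union> lang \<Sigma> \<delta>2 s2 F2"
      using dfa_from_phi[OF finS st L sub fin] by metis
    have "card ((UNIV::bool set) \<times> Q2) = 2 * n" using c2 fQ2 by (simp add: card_cartesian_product)
    moreover have "2 * n \<le> (3 * 2^(m-2) - 1) * n"
      by (rule mult_right_mono) (use k1 m in linarith, simp)
    ultimately have "card Q \<le> (3 * 2^(m-2) - 1) * n + 1" using r(2) by linarith
    then show ?thesis using r(1,3) by blast
  next
    case S
    define \<Phi> where "\<Phi> = (\<lambda>w. (delta_hat \<delta>1 s1 w, delta_hat \<delta>2 s2 w))"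
    define st where "st = (\<lambda>(x::'s \<times> 't) a. (\<delta>1 (fst x) a, \<delta>2 (snd x) a))"
    define ac where "ac = (\<lambda>(x::'s \<times> 't). fst x \<in> F1 \<or> snd x \<in> F2)"
    have L: "kstar (lang \<Sigma> \<delta>1 s1 F1) \<union> lang \<Sigma> \<delta>2 s2 F2 = {w \<in> lists \<Sigma>. ac (\<Phi> w)}"
      using kstar_loop[OF S] by (auto simp: lang_def ac_def \<Phi>_def)
    have st: "\<Phi> (w @ [a]) = st (\<Phi> w) a" for w a by (simp add: \<Phi>_def st_def)
    have sub: "\<Phi> ` lists \<Sigma> \<subseteq> Q1 \<times> Q2" using dh_in[OF d2 s2] dh_in[OF d1 s1] by (auto simp: \<Phi>_def)
    have fin: "finite (Q1 \<times> Q2)" using fQ1 fQ2 by simp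
    obtain Q \<delta> s F where r: "dfa (Q::nat set) \<Sigma> \<delta> s F" "card Q \<le> card (Q1 \<times> Q2)"
       "lang \<Sigma> \<delta> s F = kstar (lang \<Sigma> \<delta>1 s1 F1) \<union> lang \<Sigma> \<delta>2 s2 F2"
      using dfa_from_phi[OF finS st L sub fin] by metis
    have "card (Q1 \<times> Q2) = m * n" using c1 c2 by (simp add: card_cartesian_product)
    moreover have "m * n \<le> (3 * 2^(m-2) - 1) * n"
      by (rule mult_right_mono) (use k1 in linarith, simp)
    ultimately have "card Q \<le> (3 * 2^(m-2) - 1) * n + 1" using r(2) by linarith
    then show ?thesis using r(1,3) by blast
  next
    case (G f)
    define Pset where "Pset = {P. P \<subseteq> Q1 \<and> P \<noteq> {} \<and> (P \<inter> F1 \<noteq> {} \<longrightarrow> s1 \<in> P)}"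
    define S where "S = insert (True, {s1}, s2) ({False} \<times> Pset \<times> Q2)"
    have fF: "f \<in> Q1" using G F1 by blast
    have cP: "card Pset \<le> 2^m - (1 + 2^(m-2))"
      unfolding Pset_def by (rule Pset_card[OF fQ1 c1 fF G s1])
    have fP: "finite Pset" unfolding Pset_def using fQ1 by simp
    have fS: "finite S" unfolding S_def using fP fQ2 by simp
    have L: "kstar (lang \<Sigma> \<delta>1 s1 F1) \<union> lang \<Sigma> \<delta>2 s2 F2 =
        {w \<in> lists \<Sigma>. acc F1 F2 (Phi \<Sigma> \<delta>1 s1 F1 \<delta>2 s2 w)}"
    proof (rule set_eqI)
      fix w
      show "w \<in> kstar (lang \<Sigma> \<delta>1 s1 F1) \<union> lang \<Sigma> \<delta>2 s2 F2 \<longleftrightarrow>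
        w \<in> {w \<in> lists \<Sigma>. acc F1 F2 (Phi \<Sigma> \<delta>1 s1 F1 \<delta>2 s2 w)}"
      proof (cases "w \<in> lists \<Sigma>")
        case True then show ?thesis using Phi_acc[OF True, of \<delta>1 s1 F1 \<delta>2 s2 F2] by simp
      next
        case False then show ?thesis using star_union_lists[of \<Sigma> \<delta>1 s1 F1 \<delta>2 s2 F2] by auto
      qed
    qed
    have PS: "Phi \<Sigma> \<delta>1 s1 F1 \<delta>2 s2 ` lists \<Sigma> \<subseteq> S"
    proof
      fix x assume "x \<in> Phi \<Sigma> \<delta>1 s1 F1 \<delta>2 s2 ` lists \<Sigma>"
      then obtain w where w: "w \<in> lists \<Sigma>" "x = Phi \<Sigma> \<delta>1 s1 F1 \<delta>2 s2 w" by blast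
      show "x \<in> S"
      proof (cases "w = []")
        case True then show ?thesis using w by (simp add: Phi_Nil S_def)
      next
        case False
        have a1: "Rset \<Sigma> \<delta>1 s1 F1 w \<subseteq> Q1" by (rule R_sub[OF d1 w(1)])
        have a2: "Rset \<Sigma> \<delta>1 s1 F1 w \<noteq> {}" using R_self[of \<delta>1 s1 w \<Sigma> F1] by auto
        have a3: "Rset \<Sigma> \<delta>1 s1 F1 w \<inter> F1 \<noteq> {} \<longrightarrow> s1 \<in> Rset \<Sigma> \<delta>1 s1 F1 w"
          using R_closed[OF w(1), of \<delta>1 s1 F1] by blast
        have "Rset \<Sigma> \<delta>1 s1 F1 w \<in> Pset" unfolding Pset_def using a1 a2 a3 by simp
        moreover have "delta_hat \<delta>2 s2 w \<in> Q2" using dh_in[OF d2 s2 w(1)] .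
        ultimately show ?thesis using w False by (simp add: Phi_def S_def)
      qed
    qed
    have st: "\<And>w a. w \<in> lists \<Sigma> \<Longrightarrow> a \<in> \<Sigma> \<Longrightarrow>
        Phi \<Sigma> \<delta>1 s1 F1 \<delta>2 s2 (w @ [a]) = stp \<delta>1 s1 F1 \<delta>2 (Phi \<Sigma> \<delta>1 s1 F1 \<delta>2 s2 w) a"
      by (rule Phi_snoc) simp
    obtain Q \<delta> s F where r: "dfa (Q::nat set) \<Sigma> \<delta> s F" "card Q \<le> card S"
       "lang \<Sigma> \<delta> s F = kstar (lang \<Sigma> \<delta>1 s1 F1) \<union> lang \<Sigma> \<delta>2 s2 F2"
      using dfa_from_phi[OF finS st L PS fS] by metis
    have "card S \<le> Suc (card ({False} \<times> Pset \<times> Q2))"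
      unfolding S_def using fP fQ2 by (simp add: card_insert_if)
    also have "\<dots> = card Pset * n + 1" using c2 by (simp add: card_cartesian_product)
    finally have cS: "card S \<le> card Pset * n + 1" .
    obtain j where j: "m = j + 2" using m le_Suc_ex by (metis add.commute)
    have "2^m - (1 + 2^(m-2)) = 3 * 2^(m-2) - (1::nat)" using j by (simp add: power_add)
    then have "card Pset \<le> 3 * 2^(m-2) - 1" using cP by simp
    then have "card Pset * n \<le> (3 * 2^(m-2) - 1) * n" by (rule mult_right_mono) simp
    then have "card Q \<le> (3 * 2^(m-2) - 1) * n + 1" using r(2) cS by linarith
    then show ?thesis using r(1,3) by blast
  qed
qed




datatype lt = LA | LT nat | LE nat | LG nat | LU "nat list" nat

instance lt :: countable by countable_datatype

definition mact :: "nat \<Rightarrow> lt \<Rightarrow> nat \<Rightarrow> nat" where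
  "mact m l x = (case l of LA \<Rightarrow> if x = 0 then m - 1 else x
     | LT j \<Rightarrow> if x = 0 then j else x
     | LE e \<Rightarrow> if x = e then m - 1 else 0
     | LG g \<Rightarrow> 0
     | LU xs q \<Rightarrow> xs ! min x (length xs - 1))"

definition nact :: "nat \<Rightarrow> lt \<Rightarrow> nat \<Rightarrow> nat" where
  "nact n l x = (case l of LA \<Rightarrow> x | LT j \<Rightarrow> x | LE e \<Rightarrow> 0
     | LG g \<Rightarrow> if x = g then n - 1 else 0 | LU xs q \<Rightarrow> q)"

definition PS :: "nat \<Rightarrow> nat set set" where
  "PS m = {P. P \<subseteq> {..<m} \<and> P \<noteq> {} \<and> (P \<inter> {m-1} \<noteq> {} \<longrightarrow> 0 \<in> P)}"

definition Lset :: "nat \<Rightarrow> nat \<Rightarrow> lt set" where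
  "Lset m n = insert LA (LT ` {1..<m-1} \<union> LE ` {..<m} \<union> LG ` {..<n} \<union>
      (\<lambda>(P, q). LU (sorted_list_of_set P) q) ` (PS m \<times> {..<n}))"

definition Sg :: "nat \<Rightarrow> nat \<Rightarrow> nat set" where "Sg m n = to_nat ` Lset m n"
definition D1 :: "nat \<Rightarrow> nat \<Rightarrow> nat \<Rightarrow> nat" where "D1 m = (\<lambda>x c. mact m (from_nat c) x)"
definition D2 :: "nat \<Rightarrow> nat \<Rightarrow> nat \<Rightarrow> nat" where "D2 n = (\<lambda>x c. nact n (from_nat c) x)"

lemma fin_PS: "finite (PS m)" unfolding PS_def by simp

lemma fin_Lset: "finite (Lset m n)" unfolding Lset_def using fin_PS by simp

lemma PS_list: "P \<in> PS m \<Longrightarrow> set (sorted_list_of_set P) = P \<and> sorted_list_of_set P \<noteq> [] \<and> length (sorted_list_of_set P) \<le> m"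
proof -
  assume P: "P \<in> PS m"
  then have f: "finite P" and s: "P \<subseteq> {..<m}" and ne: "P \<noteq> {}" unfolding PS_def
    by (auto intro: finite_subset)
  have "card P \<le> m" using card_mono[OF _ s] by simp
  then show ?thesis using f ne by simp
qed

lemma dfa1:
  assumes "m \<ge> 2"
  shows "dfa {..<m} (Sg m n) (D1 m) 0 {m-1}"
  unfolding dfa_def
proof (intro conjI ballI)
  show "finite (Sg m n)" unfolding Sg_def using fin_Lset by simp
  show "finite {..<m}" by simp
  show "0 \<in> {..<m}" using assms by simp
  show "{m-1} \<subseteq> {..<m}" using assms by simp
next
  fix x c assume x: "x \<in> {..<m}" and c: "c \<in> Sg m n"
  then obtain l where l: "l \<in> Lset m n" "c = to_nat l" unfolding Sg_def by blast
  show "D1 m x c \<in> {..<m}"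
  proof -
    have "mact m l x < m"
    proof (cases l)
      case (LU xs q)
      then obtain P where P: "P \<in> PS m" "xs = sorted_list_of_set P"
        using l(1) unfolding Lset_def by auto
      then have "xs \<noteq> []" using PS_list[OF P(1)] by simp
      then have "length xs - 1 < length xs" by simp
      then have "min x (length xs - 1) < length xs" by (rule min.strict_coboundedI2)
      then have "xs ! min x (length xs - 1) \<in> set xs" by (rule nth_mem)
      then show ?thesis using PS_list[OF P(1)] P unfolding PS_def mact_def LU by auto
    qed (use l x assms in \<open>auto simp: mact_def Lset_def\<close>)
    then show ?thesis using l by (simp add: D1_def)
  qed
qed

lemma dfa2:
  assumes "n \<ge> 2"
  shows "dfa {..<n} (Sg m n) (D2 n) 0 {n-1}"
  unfolding dfa_def
proof (intro conjI ballI)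
  show "finite (Sg m n)" unfolding Sg_def using fin_Lset by simp
  show "finite {..<n}" by simp
  show "0 \<in> {..<n}" using assms by simp
  show "{n-1} \<subseteq> {..<n}" using assms by simp
next
  fix x c assume x: "x \<in> {..<n}" and c: "c \<in> Sg m n"
  then obtain l where l: "l \<in> Lset m n" "c = to_nat l" unfolding Sg_def by blast
  have "nact n l x < n" using l x assms by (cases l) (auto simp: nact_def Lset_def)
  then show "D2 n x c \<in> {..<n}" using l by (simp add: D2_def)
qed


lemma St_l: "stp (D1 m) 0 {m-1} (D2 n) (b, X, q) (to_nat l) =
   (False, mact m l ` X \<union> (if mact m l ` X \<inter> {m-1} \<noteq> {} then {0} else {}), nact n l q)"
  by (simp add: D1_def D2_def)

lemma Lw: "l \<in> Lset m n \<Longrightarrow> to_nat l \<in> Sg m n" by (simp add: Sg_def)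

lemma img_LT:
  assumes "m \<ge> 2" "0 \<notin> A"
  shows "mact m (LT x) ` ({0, m-1} \<union> A) = {x, m-1} \<union> A"
proof -
  have "mact m (LT x) ` ({0, m-1} \<union> A) = insert (mact m (LT x) 0) (insert (mact m (LT x) (m-1)) (mact m (LT x) ` A))"
    by simp
  moreover have "mact m (LT x) ` A = A"
  proof -
    have "\<And>y. y \<in> A \<Longrightarrow> mact m (LT x) y = y" using assms(2) by (auto simp: mact_def)
    then show ?thesis by simp
  qed
  moreover have "mact m (LT x) 0 = x" by (simp add: mact_def)
  moreover have "mact m (LT x) (m-1) = m-1" using assms(1) by (simp add: mact_def)
  ultimately show ?thesis by simp
qed

lemma reach1:
  assumes m: "m \<ge> 2" and xs: "set xs \<subseteq> {1..<m-1}"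
  shows "Phi (Sg m n) (D1 m) 0 {m-1} (D2 n) 0 (map to_nat (LA # map LT xs)) = (False, {0, m-1} \<union> set xs, 0)"
  using xs
proof (induction xs rule: rev_induct)
  case Nil
  have LA: "to_nat LA \<in> Sg m n" by (rule Lw) (simp add: Lset_def)
  have "Phi (Sg m n) (D1 m) 0 {m-1} (D2 n) 0 ([] @ [to_nat LA]) =
     stp (D1 m) 0 {m-1} (D2 n) (Phi (Sg m n) (D1 m) 0 {m-1} (D2 n) 0 []) (to_nat LA)"
    by (rule Phi_snoc) (simp add: LA)
  also have "\<dots> = (False, {0, m-1}, 0)"
    unfolding Phi_Nil St_l using m by (auto simp: mact_def nact_def)
  finally show ?case by simp
next
  case (snoc x xs)
  have x: "x \<in> {1..<m-1}" and xs: "set xs \<subseteq> {1..<m-1}" using snoc.prems by auto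
  have inS: "map to_nat (LA # map LT xs) @ [to_nat (LT x)] \<in> lists (Sg m n)"
  proof -
    have "LA \<in> Lset m n" by (simp add: Lset_def)
    moreover have "\<forall>y \<in> set (xs @ [x]). LT y \<in> Lset m n" using snoc.prems by (auto simp: Lset_def)
    ultimately show ?thesis using Lw by auto
  qed
  have "Phi (Sg m n) (D1 m) 0 {m-1} (D2 n) 0 (map to_nat (LA # map LT (xs @ [x]))) =
     Phi (Sg m n) (D1 m) 0 {m-1} (D2 n) 0 (map to_nat (LA # map LT xs) @ [to_nat (LT x)])" by simp
  also have "\<dots> = stp (D1 m) 0 {m-1} (D2 n) (Phi (Sg m n) (D1 m) 0 {m-1} (D2 n) 0 (map to_nat (LA # map LT xs))) (to_nat (LT x))"
    by (rule Phi_snoc[OF inS])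
  also have "\<dots> = stp (D1 m) 0 {m-1} (D2 n) (False, {0, m-1} \<union> set xs, 0) (to_nat (LT x))"
    by (simp only: snoc.IH[OF xs])
  also have "\<dots> = (False, {0, m-1} \<union> set (xs @ [x]), 0)"
  proof -
    have "0 \<notin> set xs" using xs by auto
    then have "mact m (LT x) ` ({0, m-1} \<union> set xs) = {x, m-1} \<union> set xs" using img_LT m by blast
    then show ?thesis unfolding St_l using m by (auto simp: nact_def)
  qed
  finally show ?case .
qed

definition wd :: "nat \<Rightarrow> nat set \<Rightarrow> nat \<Rightarrow> nat list" where
  "wd m P q = map to_nat (LA # map LT [1..<m-1]) @ [to_nat (LU (sorted_list_of_set P) q)]"

lemma img_LU:
  assumes P: "P \<in> PS m"
  shows "mact m (LU (sorted_list_of_set P) q) ` {..<m} = P"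
proof -
  let ?xs = "sorted_list_of_set P"
  have h: "set ?xs = P" "?xs \<noteq> []" "length ?xs \<le> m" using PS_list[OF P] by auto
  have "mact m (LU ?xs q) ` {..<m} = (\<lambda>x. ?xs ! min x (length ?xs - 1)) ` {..<m}"
    by (simp add: mact_def)
  also have "\<dots> = set ?xs"
  proof
    show "(\<lambda>x. ?xs ! min x (length ?xs - 1)) ` {..<m} \<subseteq> set ?xs"
    proof
      fix y assume "y \<in> (\<lambda>x. ?xs ! min x (length ?xs - 1)) ` {..<m}"
      then obtain x where "y = ?xs ! min x (length ?xs - 1)" by blast
      moreover have "min x (length ?xs - 1) < length ?xs"
      proof -
        have "length ?xs - 1 < length ?xs" using h(2) by (metis diff_less length_greater_0_conv zero_less_one)
        then show ?thesis by (rule min.strict_coboundedI2)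
      qed
      ultimately show "y \<in> set ?xs" by simp
    qed
  next
    show "set ?xs \<subseteq> (\<lambda>x. ?xs ! min x (length ?xs - 1)) ` {..<m}"
    proof
      fix y assume "y \<in> set ?xs"
      then obtain i where i: "i < length ?xs" "y = ?xs ! i" by (metis in_set_conv_nth)
      then have "i \<in> {..<m}" "min i (length ?xs - 1) = i" using h(3) by auto
      then show "y \<in> (\<lambda>x. ?xs ! min x (length ?xs - 1)) ` {..<m}" using i by force
    qed
  qed
  finally show ?thesis using h(1) by simp
qed

lemma wd_lists:
  assumes "P \<in> PS m" "q < n"
  shows "wd m P q \<in> lists (Sg m n)"
proof -
  have "LA \<in> Lset m n" by (simp add: Lset_def)
  moreover have "\<forall>y \<in> {1..<m-1}. LT y \<in> Lset m n" by (auto simp: Lset_def)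
  moreover have "LU (sorted_list_of_set P) q \<in> Lset m n" using assms unfolding Lset_def by force
  ultimately show ?thesis unfolding wd_def using Lw by auto
qed

lemma reach:
  assumes m: "m \<ge> 2" and P: "P \<in> PS m" and q: "q < n"
  shows "Phi (Sg m n) (D1 m) 0 {m-1} (D2 n) 0 (wd m P q) = (False, P, q)"
proof -
  have r1: "Phi (Sg m n) (D1 m) 0 {m-1} (D2 n) 0 (map to_nat (LA # map LT [1..<m-1])) = (False, {..<m}, 0)"
  proof -
    have "{0, m-1} \<union> set [1..<m-1] = {..<m}" using m by auto
    then show ?thesis using reach1[OF m, of "[1..<m-1]" n] by simp
  qed
  have "Phi (Sg m n) (D1 m) 0 {m-1} (D2 n) 0 (wd m P q) =
    stp (D1 m) 0 {m-1} (D2 n) (False, {..<m}, 0) (to_nat (LU (sorted_list_of_set P) q))"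
    unfolding wd_def by (simp only: Phi_snoc[OF wd_lists[OF P q, unfolded wd_def]] r1)
  also have "\<dots> = (False, P, q)"
  proof -
    have "P \<inter> {m-1} \<noteq> {} \<longrightarrow> 0 \<in> P" using P unfolding PS_def by blast
    then show ?thesis unfolding St_l img_LU[OF P] by (auto simp: nact_def)
  qed
  finally show ?thesis .
qed


lemma PS_card:
  assumes m: "m \<ge> 2"
  shows "card (PS m) = 3 * 2^(m-2) - 1"
proof -
  let ?Q = "{..<m} :: nat set"
  let ?I = "insert (m-1) ` Pow (?Q - {m-1, 0})"
  let ?B = "insert {} ?I"
  have ne: "m - 1 \<noteq> 0" using m by simp
  have eq: "PS m = Pow ?Q - ?B"
  proof (rule set_eqI, rule iffI)
    fix P assume "P \<in> PS m"
    then show "P \<in> Pow ?Q - ?B" using m ne unfolding PS_def by auto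
  next
    fix P assume P: "P \<in> Pow ?Q - ?B"
    have "m - 1 \<in> P \<longrightarrow> 0 \<in> P"
    proof
      assume a: "m - 1 \<in> P"
      show "0 \<in> P"
      proof (rule ccontr)
        assume "0 \<notin> P"
        then have "P - {m-1} \<in> Pow (?Q - {m-1, 0})" "P = insert (m-1) (P - {m-1})" using P a by auto
        then have "P \<in> ?I" by blast
        then show False using P by blast
      qed
    qed
    then show "P \<in> PS m" using P unfolding PS_def by auto
  qed
  have inj: "inj_on (insert (m-1)) (Pow (?Q - {m-1, 0}))"
    by (rule inj_onI) (metis Diff_iff PowD insertCI insert_ident subsetD)
  have cD: "card (?Q - {m-1, 0}) = m - 2" using m ne by (simp add: card_Diff_subset)
  have cI: "card ?I = 2^(m-2)" using card_image[OF inj] cD by (simp add: card_Pow)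
  have "{} \<notin> ?I" by blast
  then have cB: "card ?B = 2^(m-2) + 1" using cI by simp
  have BP: "?B \<subseteq> Pow ?Q" using m by auto
  have "card (Pow ?Q - ?B) = 2^m - (2^(m-2) + 1)"
    using card_Diff_subset[OF finite_subset[OF BP] BP] cB by (simp add: card_Pow)
  moreover obtain j where j: "m = j + 2" using m le_Suc_ex by (metis add.commute)
  moreover have "2^m - (2^(m-2) + 1) = 3 * 2^(m-2) - (1::nat)" using j by (simp add: power_add)
  ultimately show ?thesis using eq by simp
qed

lemma acc_simp: "acc F1 F2 (b, X, q) = (b \<or> X \<inter> F1 \<noteq> {} \<or> q \<in> F2)" by simp

lemma acc_LE:
  assumes m: "m \<ge> 2" and n: "n \<ge> 2"
  shows "acc {m-1} {n-1} (stp (D1 m) 0 {m-1} (D2 n) (b, X, q) (to_nat (LE e))) = (e \<in> X)"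
proof -
  have h: "m - 1 \<in> mact m (LE e) ` X \<longleftrightarrow> e \<in> X"
  proof
    assume "m - 1 \<in> mact m (LE e) ` X"
    then obtain x where "x \<in> X" "m - 1 = mact m (LE e) x" by blast
    then show "e \<in> X" using m by (auto simp: mact_def split: if_splits)
  next
    assume "e \<in> X"
    then show "m - 1 \<in> mact m (LE e) ` X" by (force simp: mact_def)
  qed
  have "m - 1 \<noteq> 0" "n - 1 \<noteq> 0" using m n by auto
  then show ?thesis unfolding St_l acc_simp using h by (auto simp: nact_def)
qed

lemma acc_LG:
  assumes m: "m \<ge> 2" and n: "n \<ge> 2"
  shows "acc {m-1} {n-1} (stp (D1 m) 0 {m-1} (D2 n) (b, X, q) (to_nat (LG g))) = (q = g)"
proof -
  have h: "m - 1 \<notin> mact m (LG g) ` X" using m by (auto simp: mact_def)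
  have "m - 1 \<noteq> 0" "n - 1 \<noteq> 0" using m n by auto
  then show ?thesis unfolding St_l acc_simp using h by (auto simp: nact_def)
qed

lemma sep1a:
  assumes m: "m \<ge> 2" and n: "n \<ge> 2" and P: "P \<in> PS m" "P' \<in> PS m" and q: "q < n" "q' < n"
    and ne: "(P, q) \<noteq> (P', q')"
  shows "\<exists>l \<in> Lset m n. acc {m-1} {n-1} (stp (D1 m) 0 {m-1} (D2 n) (False, P, q) (to_nat l)) \<noteq>
                        acc {m-1} {n-1} (stp (D1 m) 0 {m-1} (D2 n) (False, P', q') (to_nat l))"
proof (cases "P = P'")
  case False
  then obtain e where e: "(e \<in> P) \<noteq> (e \<in> P')" by blast
  then have "e < m" using P unfolding PS_def by auto
  then have l: "LE e \<in> Lset m n" by (simp add: Lset_def)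
  have "acc {m-1} {n-1} (stp (D1 m) 0 {m-1} (D2 n) (False, P, q) (to_nat (LE e))) \<noteq>
        acc {m-1} {n-1} (stp (D1 m) 0 {m-1} (D2 n) (False, P', q') (to_nat (LE e)))"
    unfolding acc_LE[OF m n] using e .
  then show ?thesis using l by (rule_tac bexI)
next
  case True
  then have "q \<noteq> q'" using ne by simp
  moreover have "LG q \<in> Lset m n" using q by (simp add: Lset_def)
  moreover have "acc {m-1} {n-1} (stp (D1 m) 0 {m-1} (D2 n) (False, P, q) (to_nat (LG q))) \<noteq>
        acc {m-1} {n-1} (stp (D1 m) 0 {m-1} (D2 n) (False, P', q') (to_nat (LG q)))"
    unfolding acc_LG[OF m n] using \<open>q \<noteq> q'\<close> by simp
  ultimately show ?thesis by (rule_tac bexI)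
qed

lemma sep1b:
  assumes m: "m \<ge> 2" and n: "n \<ge> 2" and P: "P \<in> PS m" and q: "q < n"
  shows "acc {m-1} {n-1} (True, {0}, 0) \<noteq> acc {m-1} {n-1} (False, P, q) \<or>
    (\<exists>l \<in> Lset m n. acc {m-1} {n-1} (stp (D1 m) 0 {m-1} (D2 n) (True, {0}, 0) (to_nat l)) \<noteq>
                    acc {m-1} {n-1} (stp (D1 m) 0 {m-1} (D2 n) (False, P, q) (to_nat l)))"
proof (cases "acc {m-1} {n-1} (False, P, q)")
  case False then show ?thesis by simp
next
  case True
  then have "m - 1 \<in> P \<or> q = n - 1" by auto
  then show ?thesis
  proof
    assume a: "m - 1 \<in> P"
    have "LE (m-1) \<in> Lset m n" using m by (simp add: Lset_def)
    moreover have "acc {m-1} {n-1} (stp (D1 m) 0 {m-1} (D2 n) (True, {0}, 0) (to_nat (LE (m-1)))) \<noteq>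
        acc {m-1} {n-1} (stp (D1 m) 0 {m-1} (D2 n) (False, P, q) (to_nat (LE (m-1))))"
      unfolding acc_LE[OF m n] using a m by simp
    ultimately show ?thesis by (rule_tac disjI2, rule_tac bexI)
  next
    assume a: "q = n - 1"
    have "LG (n-1) \<in> Lset m n" using n by (simp add: Lset_def)
    moreover have "acc {m-1} {n-1} (stp (D1 m) 0 {m-1} (D2 n) (True, {0}, 0) (to_nat (LG (n-1)))) \<noteq>
        acc {m-1} {n-1} (stp (D1 m) 0 {m-1} (D2 n) (False, P, q) (to_nat (LG (n-1))))"
      unfolding acc_LG[OF m n] using a n by simp
    ultimately show ?thesis by (rule_tac disjI2, rule_tac bexI)
  qed
qed




definition wdo :: "nat \<Rightarrow> (nat set \<times> nat) option \<Rightarrow> nat list" where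
  "wdo m i = (case i of None \<Rightarrow> [] | Some (P, q) \<Rightarrow> wd m P q)"

definition cf :: "(nat set \<times> nat) option \<Rightarrow> bool \<times> nat set \<times> nat" where
  "cf i = (case i of None \<Rightarrow> (True, {0}, 0) | Some (P, q) \<Rightarrow> (False, P, q))"

lemma lower:
  assumes m: "m \<ge> 2" and n: "n \<ge> 2"
    and d: "dfa (Q::nat set) (Sg m n) \<delta> s F"
    and L: "lang (Sg m n) \<delta> s F = kstar (lang (Sg m n) (D1 m) 0 {m-1}) \<union> lang (Sg m n) (D2 n) 0 {n-1}"
  shows "(3 * 2^(m-2) - 1) * n + 1 \<le> card Q"
proof -
  let ?L = "kstar (lang (Sg m n) (D1 m) 0 {m-1}) \<union> lang (Sg m n) (D2 n) 0 {n-1}"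
  let ?Ph = "Phi (Sg m n) (D1 m) 0 {m-1} (D2 n) 0"
  let ?St = "stp (D1 m) 0 {m-1} (D2 n)"
  let ?Ac = "acc {m-1} {n-1}"
  define I where "I = insert None (Some ` (PS m \<times> {..<n}))"
  have W: "wdo m i \<in> lists (Sg m n)" if iI: "i \<in> I" for i
  proof (cases i)
    case None then show ?thesis by (simp add: wdo_def)
  next
    case (Some pq)
    then obtain P q where pq: "i = Some (P, q)" "P \<in> PS m" "q < n" using iI unfolding I_def by auto
    then show ?thesis using wd_lists[OF pq(2,3)] by (simp add: wdo_def)
  qed
  have Ph: "?Ph (wdo m i) = cf i" if iI: "i \<in> I" for i
  proof (cases i)
    case None then show ?thesis by (simp add: wdo_def cf_def Phi_Nil)
  next
    case (Some pq)
    then obtain P q where pq: "i = Some (P, q)" "P \<in> PS m" "q < n" using iI unfolding I_def by auto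
    then show ?thesis using reach[OF m pq(2,3)] by (simp add: wdo_def cf_def)
  qed
  have out0: "(wdo m i @ [] \<in> ?L) = ?Ac (cf i)" if "i \<in> I" for i
    using Phi_acc[OF W[OF that], of "D1 m" 0 "{m-1}" "D2 n" 0 "{n-1}"] Ph[OF that] by simp
  have out1: "(wdo m i @ [to_nat l] \<in> ?L) = ?Ac (?St (cf i) (to_nat l))"
    if "i \<in> I" "l \<in> Lset m n" for i l
  proof -
    have wl: "wdo m i @ [to_nat l] \<in> lists (Sg m n)" using W[OF that(1)] Lw[OF that(2)] by simp
    have "(wdo m i @ [to_nat l] \<in> ?L) = ?Ac (?Ph (wdo m i @ [to_nat l]))"
      by (rule Phi_acc[OF wl])
    also have "?Ph (wdo m i @ [to_nat l]) = ?St (?Ph (wdo m i)) (to_nat l)"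
      by (rule Phi_snoc[OF wl])
    finally show ?thesis using Ph[OF that(1)] by simp
  qed
  have sep: "\<exists>z \<in> lists (Sg m n). (wdo m i @ z \<in> ?L) \<noteq> (wdo m j @ z \<in> ?L)"
    if ij: "i \<in> I" "j \<in> I" "i \<noteq> j" for i j
  proof -
    have cfs: "?Ac (cf i) \<noteq> ?Ac (cf j) \<or>
      (\<exists>l \<in> Lset m n. ?Ac (?St (cf i) (to_nat l)) \<noteq> ?Ac (?St (cf j) (to_nat l)))"
    proof (cases i)
      case None
      then obtain P q where j: "j = Some (P, q)" "P \<in> PS m" "q < n" using ij unfolding I_def by auto
      show ?thesis using sep1b[OF m n j(2,3)] None j(1) by (simp add: cf_def)
    next
      case (Some pq)
      then obtain P q where i: "i = Some (P, q)" "P \<in> PS m" "q < n" using ij unfolding I_def by auto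
      show ?thesis
      proof (cases j)
        case None
        have ci: "cf i = (False, P, q)" "cf j = (True, {0}, 0)" using i(1) None by (auto simp: cf_def)
        have disj: "?Ac (False, P, q) \<noteq> ?Ac (True, {0}, 0) \<or>
          (\<exists>l \<in> Lset m n. ?Ac (?St (False, P, q) (to_nat l)) \<noteq> ?Ac (?St (True, {0}, 0) (to_nat l)))"
          using sep1b[OF m n i(2,3)]
        proof
          assume "?Ac (True, {0}, 0) \<noteq> ?Ac (False, P, q)"
          then have "?Ac (False, P, q) \<noteq> ?Ac (True, {0}, 0)" by (rule not_sym)
          then show ?thesis by (rule disjI1)
        next
          assume "\<exists>l \<in> Lset m n. ?Ac (?St (True, {0}, 0) (to_nat l)) \<noteq> ?Ac (?St (False, P, q) (to_nat l))"
          then obtain l where l: "l \<in> Lset m n"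
            "?Ac (?St (True, {0}, 0) (to_nat l)) \<noteq> ?Ac (?St (False, P, q) (to_nat l))" by blast
          from l(2) have "?Ac (?St (False, P, q) (to_nat l)) \<noteq> ?Ac (?St (True, {0}, 0) (to_nat l))"
            by (rule not_sym)
          then have "\<exists>l \<in> Lset m n. ?Ac (?St (False, P, q) (to_nat l)) \<noteq> ?Ac (?St (True, {0}, 0) (to_nat l))"
            using l(1) by (rule_tac bexI)
          then show ?thesis by (rule disjI2)
        qed
        show ?thesis unfolding ci by (rule disj)
      next
        case (Some pq')
        then obtain P' q' where j: "j = Some (P', q')" "P' \<in> PS m" "q' < n" using ij unfolding I_def by auto
        have "(P, q) \<noteq> (P', q')" using i j ij(3) by auto
        then show ?thesis using sep1a[OF m n i(2) j(2) i(3) j(3)] i(1) j(1) by (simp add: cf_def)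
      qed
    qed
    then show ?thesis
    proof
      assume "?Ac (cf i) \<noteq> ?Ac (cf j)"
      then have "(wdo m i @ [] \<in> ?L) \<noteq> (wdo m j @ [] \<in> ?L)" using out0 ij by simp
      then show ?thesis by (rule bexI[of _ "[]"]) simp
    next
      assume "\<exists>l \<in> Lset m n. ?Ac (?St (cf i) (to_nat l)) \<noteq> ?Ac (?St (cf j) (to_nat l))"
      then obtain l where l: "l \<in> Lset m n" "?Ac (?St (cf i) (to_nat l)) \<noteq> ?Ac (?St (cf j) (to_nat l))"
        by blast
      then have "(wdo m i @ [to_nat l] \<in> ?L) \<noteq> (wdo m j @ [to_nat l] \<in> ?L)"
        using out1[OF ij(1) l(1)] out1[OF ij(2) l(1)] by simp
      moreover have "[to_nat l] \<in> lists (Sg m n)" using Lw[OF l(1)] by simp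
      ultimately show ?thesis by (rule_tac bexI)
    qed
  qed
  have "card I \<le> card Q"
    by (rule lower_by_dist[OF d L, of I "wdo m"]) (use W sep in auto)
  moreover have "card I = (3 * 2^(m-2) - 1) * n + 1"
  proof -
    have "finite (Some ` (PS m \<times> {..<n}))" using fin_PS by simp
    moreover have "None \<notin> Some ` (PS m \<times> {..<n})" by blast
    ultimately have "card I = Suc (card (Some ` (PS m \<times> {..<n})))" unfolding I_def by simp
    also have "\<dots> = Suc (card (PS m) * n)"
      by (simp add: card_image card_cartesian_product)
    finally show ?thesis using PS_card[OF m] by simp
  qed
  ultimately show ?thesis by simp
qed

theorem theorem3:
  fixes m n :: nat
  assumes "m \<ge> 2" and "n \<ge> 2"
  shows
   "(\<forall>(\<Sigma>::'a set) (Q1::'s set) \<delta>1 s1 F1 (Q2::'t set) \<delta>2 s2 F2.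
        dfa Q1 \<Sigma> \<delta>1 s1 F1 \<and> card Q1 = m \<and> dfa Q2 \<Sigma> \<delta>2 s2 F2 \<and> card Q2 = n \<longrightarrow>
        (\<exists>(Q::nat set) \<delta> s F. dfa Q \<Sigma> \<delta> s F \<and> card Q \<le> 3 * 2^m * n div 4 - n + 1 \<and>
            lang \<Sigma> \<delta> s F = kstar (lang \<Sigma> \<delta>1 s1 F1) \<union> lang \<Sigma> \<delta>2 s2 F2))
    \<and> (\<exists>(\<Sigma>::nat set) (Q1::nat set) \<delta>1 s1 F1 (Q2::nat set) \<delta>2 s2 F2.
        dfa Q1 \<Sigma> \<delta>1 s1 F1 \<and> card Q1 = m \<and> dfa Q2 \<Sigma> \<delta>2 s2 F2 \<and> card Q2 = n \<and>
        sc \<Sigma> (kstar (lang \<Sigma> \<delta>1 s1 F1) \<union> lang \<Sigma> \<delta>2 s2 F2) = 3 * 2^m * n div 4 - n + 1)"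
proof (rule conjI)
  have K: "3 * 2^m * n div 4 - n + 1 = (3 * 2^(m-2) - 1) * n + 1" by (rule arith_K[OF assms(1)])
  show "\<forall>(\<Sigma>::'a set) (Q1::'s set) \<delta>1 s1 F1 (Q2::'t set) \<delta>2 s2 F2.
        dfa Q1 \<Sigma> \<delta>1 s1 F1 \<and> card Q1 = m \<and> dfa Q2 \<Sigma> \<delta>2 s2 F2 \<and> card Q2 = n \<longrightarrow>
        (\<exists>(Q::nat set) \<delta> s F. dfa Q \<Sigma> \<delta> s F \<and> card Q \<le> 3 * 2^m * n div 4 - n + 1 \<and>
            lang \<Sigma> \<delta> s F = kstar (lang \<Sigma> \<delta>1 s1 F1) \<union> lang \<Sigma> \<delta>2 s2 F2)"
    unfolding K
  proof (intro allI impI)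
    fix \<Sigma> :: "'a set" and Q1 :: "'s set" and \<delta>1 s1 F1 and Q2 :: "'t set" and \<delta>2 s2 F2
    assume h: "dfa Q1 \<Sigma> \<delta>1 s1 F1 \<and> card Q1 = m \<and> dfa Q2 \<Sigma> \<delta>2 s2 F2 \<and> card Q2 = n"
    show "\<exists>(Q::nat set) \<delta> s F. dfa Q \<Sigma> \<delta> s F \<and> card Q \<le> (3 * 2^(m-2) - 1) * n + 1 \<and>
            lang \<Sigma> \<delta> s F = kstar (lang \<Sigma> \<delta>1 s1 F1) \<union> lang \<Sigma> \<delta>2 s2 F2"
      using h by (intro upper[OF assms(1)]) auto
  qed
  let ?L = "kstar (lang (Sg m n) (D1 m) 0 {m-1}) \<union> lang (Sg m n) (D2 n) 0 {n-1}"
  let ?K = "(3 * 2^(m-2) - 1) * n + 1"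
  have d1: "dfa {..<m} (Sg m n) (D1 m) 0 {m-1}" by (rule dfa1[OF assms(1)])
  have d2: "dfa {..<n} (Sg m n) (D2 n) 0 {n-1}" by (rule dfa2[OF assms(2)])
  obtain Q0 :: "nat set" and \<delta>0 s0 F0 where r: "dfa Q0 (Sg m n) \<delta>0 s0 F0" "card Q0 \<le> ?K"
    "lang (Sg m n) \<delta>0 s0 F0 = ?L"
    using upper[OF assms(1) d1 _ d2, of n] by auto
  have lo: "\<And>k. (\<exists>(Q::nat set) \<delta> s F. dfa Q (Sg m n) \<delta> s F \<and> card Q = k \<and> lang (Sg m n) \<delta> s F = ?L) \<Longrightarrow> ?K \<le> k"
    using lower[OF assms] by blast
  have c0: "card Q0 = ?K" using r lower[OF assms r(1) r(3)] by simp
  have "sc (Sg m n) ?L = ?K"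
    unfolding sc_def
  proof (rule Least_equality)
    show "\<exists>(Q::nat set) \<delta> s F. dfa Q (Sg m n) \<delta> s F \<and> card Q = ?K \<and> lang (Sg m n) \<delta> s F = ?L"
      using r c0 by blast
  next
    fix k assume "\<exists>(Q::nat set) \<delta> s F. dfa Q (Sg m n) \<delta> s F \<and> card Q = k \<and> lang (Sg m n) \<delta> s F = ?L"
    then show "?K \<le> k" by (rule lo)
  qed
  then show "\<exists>(\<Sigma>::nat set) (Q1::nat set) \<delta>1 s1 F1 (Q2::nat set) \<delta>2 s2 F2.
        dfa Q1 \<Sigma> \<delta>1 s1 F1 \<and> card Q1 = m \<and> dfa Q2 \<Sigma> \<delta>2 s2 F2 \<and> card Q2 = n \<and>
        sc \<Sigma> (kstar (lang \<Sigma> \<delta>1 s1 F1) \<union> lang \<Sigma> \<delta>2 s2 F2) = 3 * 2^m * n div 4 - n + 1"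
    unfolding K using d1 d2 by (intro exI[of _ "Sg m n"] exI[of _ "{..<m}"] exI[of _ "D1 m"] exI[of _ 0]
      exI[of _ "{m-1}"] exI[of _ "{..<n}"] exI[of _ "D2 n"] exI[of _ 0] exI[of _ "{n-1}"]) simp
qed


end
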